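(* Let $d\ge 2$. If the graph of a stacked $(d+1)$-polytope is $d$-ball packable, then its $d$-ball packing $\mathcal S$ is stress-free: the only function $T$ on the edges of the tangency graph $G(\mathcal S)$ satisfying $\sum_{j:\,S_iS_j\in E(G(\mathcal S))}T(S_iS_j)(\mathbf v_j-\mathbf v_i)=0$ for every ball $S_i\in\mathcal S$ is $T\equiv 0$.
   Context: A stacked polytope is one obtained from a simplex by repeatedly gluing a new simplex onto a facet. A $d$-ball in $\hat{\mathbb R}^d$ is a closed ball, closed exterior of an open ball with $\infty$, or a closed half-space with $\infty$; a $d$-ball packing is a collection of $d$-balls with disjoint interiors; its tangency graph joins balls meeting in exactly one point; a graph is $d$-ball packable if isomorphic to the tangency graph of some $d$-ball packing. The vectors $\mathbf v_i$ are defined as follows: map the packing by stereographic projection (after a Möbius transformation if necessary) to a packing of spherical caps on $\mathbb S^d\subset\mathbb R^{d+1}$, each of spherical radius $\theta_i<\pi/2$ with center $\mathbf c_i$; then $\mathbf v_i=\mathbf c_i/\cos\theta_i$ is the polar vertex of the cap corresponding to $S_i$ (the point with $\partial C_i=\mathbb S^d\cap\{x:\langle x,\mathbf v_i\rangle=1\}$). *)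

theory Defs
  imports "HOL-Analysis.Analysis"
begin

text \<open>A stacked (d+1)-polytope is described by its vertex set V, its edge set E
  (a set of 2-element sets) and its set of facets F (each a (d+1)-set of vertices).
  Start: a (d+1)-simplex on d+2 vertices.  Step: glue a new (d+1)-simplex onto a
  facet f, i.e. add a new vertex v adjacent to all vertices of f; the facet f is
  replaced by the facets (f - {u}) + v for u in f.\<close>

inductive stacked_polytope :: "nat \<Rightarrow> 'v set \<Rightarrow> 'v set set \<Rightarrow> 'v set set \<Rightarrow> bool"
  for d :: nat where
  simplex: "finite S \<Longrightarrow> card S = d + 2 \<Longrightarrow>
     stacked_polytope d S {{a, b} | a b. a \<in> S \<and> b \<in> S \<and> a \<noteq> b} {S - {a} | a. a \<in> S}"
| stack: "stacked_polytope d V E F \<Longrightarrow> f \<in> F \<Longrightarrow> v \<notin> V \<Longrightarrow>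
     stacked_polytope d (insert v V) (E \<union> {{v, u} | u. u \<in> f})
        ((F - {f}) \<union> {insert v (f - {u}) | u. u \<in> f})"

definition stacked_polytope_graph :: "nat \<Rightarrow> 'v set \<Rightarrow> 'v set set \<Rightarrow> bool" where
  "stacked_polytope_graph d V E \<longleftrightarrow> (\<exists>F. stacked_polytope d V E F)"

text \<open>Unit sphere S^d in R^{d+1} (here R^{d+1} = real^'n with CARD('n) = d+1).\<close>
definition unit_sphere :: "(real^'n) set" where
  "unit_sphere = {x. norm x = 1}"

definition cap :: "real^'n \<Rightarrow> real \<Rightarrow> (real^'n) set" where
  "cap c th = {x \<in> unit_sphere. x \<bullet> c \<ge> cos th}"

definition cap_interior :: "real^'n \<Rightarrow> real \<Rightarrow> (real^'n) set" where
  "cap_interior c th = {x \<in> unit_sphere. x \<bullet> c > cos th}"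

definition cap_packing :: "'v set \<Rightarrow> ('v \<Rightarrow> real^'n) \<Rightarrow> ('v \<Rightarrow> real) \<Rightarrow> bool" where
  "cap_packing V c th \<longleftrightarrow>
     (\<forall>i\<in>V. norm (c i) = 1 \<and> 0 < th i \<and> th i < pi / 2) \<and>
     (\<forall>i\<in>V. \<forall>j\<in>V. i \<noteq> j \<longrightarrow> cap_interior (c i) (th i) \<inter> cap_interior (c j) (th j) = {})"

definition caps_tangent :: "real^'n \<Rightarrow> real \<Rightarrow> real^'n \<Rightarrow> real \<Rightarrow> bool" where
  "caps_tangent c1 t1 c2 t2 \<longleftrightarrow> (\<exists>!x. x \<in> cap c1 t1 \<inter> cap c2 t2)"

definition tangency_graph_is :: "'v set \<Rightarrow> ('v \<Rightarrow> real^'n) \<Rightarrow> ('v \<Rightarrow> real) \<Rightarrow> 'v set set \<Rightarrow> bool" where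
  "tangency_graph_is V c th E \<longleftrightarrow>
     E \<subseteq> {{i, j} | i j. i \<in> V \<and> j \<in> V \<and> i \<noteq> j} \<and>
     (\<forall>i\<in>V. \<forall>j\<in>V. i \<noteq> j \<longrightarrow> ({i, j} \<in> E \<longleftrightarrow> caps_tangent (c i) (th i) (c j) (th j)))"

definition polar_vertex :: "real^'n \<Rightarrow> real \<Rightarrow> real^'n" where
  "polar_vertex c th = (1 / cos th) *\<^sub>R c"

definition stress_free :: "'v set \<Rightarrow> 'v set set \<Rightarrow> ('v \<Rightarrow> real^'n) \<Rightarrow> bool" where
  "stress_free V E v \<longleftrightarrow>
     (\<forall>T :: 'v set \<Rightarrow> real.
        (\<forall>i\<in>V. (\<Sum>j\<in>{j\<in>V. {i, j} \<in> E}. T {i, j} *\<^sub>R (v j - v i)) = 0)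
        \<longrightarrow> (\<forall>e\<in>E. T e = 0))"

end

theory Submission
  imports Defs
begin


lemma cap_dot_ge:
  fixes a b x :: "real^'n"
  assumes na: "norm a = 1" and nb: "norm b = 1" and nx: "norm x = 1"
    and xa: "x \<bullet> a \<ge> cos al" and xb: "x \<bullet> b \<ge> cos be"
    and al: "0 \<le> al" "al \<le> pi/2" and be: "0 \<le> be" "be \<le> pi/2"
  shows "a \<bullet> b \<ge> cos (al + be)"
proof -
  define s where "s = x \<bullet> a"
  define r where "r = x \<bullet> b"
  define u where "u = a - s *\<^sub>R x"
  define w where "w = b - r *\<^sub>R x"
  have xx: "x \<bullet> x = 1" using nx by (simp add: dot_square_norm)
  have aa: "a \<bullet> a = 1" using na by (simp add: dot_square_norm)
  have bb: "b \<bullet> b = 1" using nb by (simp add: dot_square_norm)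
  have uw: "u \<bullet> w = a \<bullet> b - s * r"
    unfolding u_def w_def s_def r_def using xx
    by (simp add: inner_diff_left inner_diff_right inner_commute algebra_simps)
  have uu: "norm u ^ 2 = 1 - s^2"
    unfolding u_def s_def power2_norm_eq_inner using xx aa
    by (simp add: inner_diff_left inner_diff_right inner_commute algebra_simps power2_eq_square)
  have ww: "norm w ^ 2 = 1 - r^2"
    unfolding w_def r_def power2_norm_eq_inner using xx bb
    by (simp add: inner_diff_left inner_diff_right inner_commute algebra_simps power2_eq_square)
  have cs: "- (norm u * norm w) \<le> u \<bullet> w"
    using Cauchy_Schwarz_ineq2[of u w] by (simp add: abs_le_iff)
  have ca: "cos al \<ge> 0" using al by (intro cos_ge_zero) auto
  have cb: "cos be \<ge> 0" using be by (intro cos_ge_zero) auto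
  have sa: "sin al \<ge> 0" using al by (intro sin_ge_zero) auto
  have sb: "sin be \<ge> 0" using be by (intro sin_ge_zero) auto
  have s0: "s \<ge> cos al" using xa s_def by simp
  have r0: "r \<ge> cos be" using xb r_def by simp
  have "(cos al)^2 \<le> s^2" using s0 ca by (intro power_mono) auto
  hence "norm u ^ 2 \<le> (sin al)^2" using uu sin_cos_squared_add[of al] by linarith
  hence nu: "norm u \<le> sin al" using sa by (rule power2_le_imp_le)
  have "(cos be)^2 \<le> r^2" using r0 cb by (intro power_mono) auto
  hence "norm w ^ 2 \<le> (sin be)^2" using ww sin_cos_squared_add[of be] by linarith
  hence nw: "norm w \<le> sin be" using sb by (rule power2_le_imp_le)
  have "norm u * norm w \<le> sin al * sin be" by (rule mult_mono[OF nu nw]) (use sa in auto)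
  moreover have "cos al * cos be \<le> s * r" by (rule mult_mono[OF s0 r0]) (use ca cb s0 in auto)
  ultimately show ?thesis using uw cs by (simp add: cos_add)
qed

lemma cap_dot_le:
  fixes a b :: "real^'n"
  assumes na: "norm a = 1" and nb: "norm b = 1"
    and al: "0 < al" "al < pi/2" and be: "0 < be" "be < pi/2"
    and no: "\<And>x. norm x = 1 \<Longrightarrow> x \<bullet> a > cos al \<Longrightarrow> x \<bullet> b > cos be \<Longrightarrow> False"
  shows "a \<bullet> b \<le> cos (al + be)"
proof (rule ccontr)
  assume "\<not> ?thesis"
  hence gt: "a \<bullet> b > cos (al + be)" by simp
  define k where "k = a \<bullet> b"
  have aa: "a \<bullet> a = 1" using na by (simp add: dot_square_norm)
  have bb: "b \<bullet> b = 1" using nb by (simp add: dot_square_norm)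
  have kb: "\<bar>k\<bar> \<le> 1" unfolding k_def using Cauchy_Schwarz_ineq2[of a b] na nb by simp
  show False
  proof (cases "k = 1")
    case True
    have "cos al < 1" using al cos_monotone_0_pi[of 0 al] by simp
    moreover have "cos be < 1" using be cos_monotone_0_pi[of 0 be] by simp
    ultimately show False using no[of a] na aa True k_def by simp
  next
    case False
    have km: "k \<noteq> -1"
    proof
      assume "k = -1"
      with gt k_def show False by (smt (verit) cos_ge_minus_one)
    qed
    have k1: "-1 < k" "k < 1" using kb False km by auto
    define g where "g = arccos k"
    have g0: "0 \<le> g" "g \<le> pi" using arccos_bounded[of k] k1 g_def by auto
    have cg: "cos g = k" using g_def k1 by simp
    define s where "s = sin g"
    have sdef: "s = sqrt (1 - k^2)" using s_def g_def sin_arccos_abs[of k] kb by simp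
    have spos: "s > 0" unfolding sdef using k1 by (simp add: abs_square_less_1 abs_less_iff)
    have ss: "s^2 = 1 - k^2" unfolding sdef using k1 by (simp add: abs_square_less_1 abs_less_iff less_imp_le)
    have "al + be \<le> pi" using al be by simp
    hence glt: "g < al + be"
      using gt cg k_def g0 al be cos_mono_less_eq[of "al+be" g] by auto
    define p where "p = g * al / (al + be)"
    define q where "q = g * be / (al + be)"
    have pq: "g - p = q" unfolding p_def q_def using al be by (simp add: field_simps)
    have p0: "0 \<le> p" using g0 al be p_def by simp
    have q0: "0 \<le> q" using g0 al be q_def by simp
    have "g * al < (al + be) * al" using glt al by (intro mult_strict_right_mono) auto
    hence pa: "p < al" unfolding p_def using al be by (simp add: divide_less_eq mult.commute)
    have "g * be < (al + be) * be" using glt be by (intro mult_strict_right_mono) auto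
    hence qb: "q < be" unfolding q_def using al be by (simp add: divide_less_eq mult.commute)
    define e where "e = (1/s) *\<^sub>R (b - k *\<^sub>R a)"
    define x where "x = cos p *\<^sub>R a + sin p *\<^sub>R e"
    have ae: "a \<bullet> e = 0" unfolding e_def k_def using aa
      by (simp add: inner_diff_right)
    have "e \<bullet> b = (1/s) * (b \<bullet> b - k * (a \<bullet> b))" unfolding e_def
      by (simp add: inner_diff_left)
    also have "\<dots> = (1/s) * s^2" using bb ss k_def by (simp add: power2_eq_square)
    also have "\<dots> = s" using spos by (simp add: power2_eq_square)
    finally have be': "e \<bullet> b = s" .
    have ee: "e \<bullet> e = 1" unfolding e_def using aa bb spos ss k_def
      by (simp add: inner_diff_left inner_diff_right inner_commute power2_eq_square field_simps)
    have xa: "x \<bullet> a = cos p" unfolding x_def using aa ae by (simp add: inner_add_left inner_commute[of e a])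
    have xb: "x \<bullet> b = cos q" unfolding x_def using be' k_def cg s_def pq[symmetric]
      by (simp add: inner_add_left inner_commute[of b a] inner_commute[of b e] cos_diff mult.commute)
    have "x \<bullet> x = 1" unfolding x_def using aa ae ee
      by (simp add: inner_add_left inner_add_right inner_commute power2_eq_square[symmetric])
    hence nx: "norm x = 1" by (simp add: norm_eq_1)
    have "cos al < cos p" using cos_mono_less_eq[of al p] p0 pa al by simp
    moreover have "cos be < cos q" using cos_mono_less_eq[of be q] q0 qb be by simp
    ultimately show False using no[OF nx] xa xb by simp
  qed
qed



lemma aff_indep:
  fixes P :: "'v \<Rightarrow> real^'n" and t lam :: "'v \<Rightarrow> real"
  assumes fin: "finite W" and c2: "card W \<noteq> 2"
    and tp: "\<And>i. i \<in> W \<Longrightarrow> t i > 0"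
    and dot: "\<And>i j. i \<in> W \<Longrightarrow> j \<in> W \<Longrightarrow> P i \<bullet> P j = 1 - t i * t j + (if i = j then 2 * (t j)^2 else 0)"
    and s0: "(\<Sum>i\<in>W. lam i) = 0"
    and v0: "(\<Sum>i\<in>W. lam i *\<^sub>R P i) = 0"
  shows "\<forall>i\<in>W. lam i = 0"
proof -
  define S where "S = (\<Sum>i\<in>W. lam i * t i)"
  have key: "lam j * t j = S / 2" if j: "j \<in> W" for j
  proof -
    have "0 = (\<Sum>i\<in>W. lam i *\<^sub>R P i) \<bullet> P j" using v0 by simp
    also have "\<dots> = (\<Sum>i\<in>W. lam i * (P i \<bullet> P j))" by (simp add: inner_sum_left)
    also have "\<dots> = (\<Sum>i\<in>W. lam i - t j * (lam i * t i) + (if i = j then 2 * lam j * (t j)^2 else 0))"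
      by (intro sum.cong refl, subst dot[OF _ j], auto simp: algebra_simps)
    also have "\<dots> = - t j * S + 2 * lam j * (t j)^2"
      using s0 j fin by (simp add: sum.distrib sum_subtractf sum_distrib_left S_def sum_negf)
    finally have "t j * (2 * lam j * t j - S) = 0" by (simp add: algebra_simps power2_eq_square) linarith
    thus ?thesis using tp[OF j] by simp
  qed
  have "(\<Sum>i\<in>W. lam i * t i) = (\<Sum>i\<in>W. S / 2)" using key by (intro sum.cong) auto
  hence "S = (\<Sum>i\<in>W. S / 2)" by (simp only: S_def)
  hence "S = real (card W) * S / 2" by simp
  hence "S * (2 - real (card W)) = 0" by (simp add: algebra_simps)
  moreover have "2 - real (card W) \<noteq> 0" using c2 by simp
  ultimately have "S = 0" by simp
  thus ?thesis using key tp by (metis divide_eq_0_iff mult_eq_0_iff less_irrefl)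
qed

lemma star_indep:
  fixes P :: "'v \<Rightarrow> real^'n" and t mu :: "'v \<Rightarrow> real"
  assumes fin: "finite W" and c2: "card W \<noteq> 2" and x: "x \<in> W"
    and tp: "\<And>i. i \<in> W \<Longrightarrow> t i > 0"
    and dot: "\<And>i j. i \<in> W \<Longrightarrow> j \<in> W \<Longrightarrow> P i \<bullet> P j = 1 - t i * t j + (if i = j then 2 * (t j)^2 else 0)"
    and eq: "(\<Sum>u\<in>W-{x}. mu u *\<^sub>R (P u - P x)) = 0"
  shows "\<forall>u\<in>W-{x}. mu u = 0"
proof -
  define lam where "lam = (\<lambda>u. if u = x then - (\<Sum>u\<in>W-{x}. mu u) else mu u)"
  have W: "W = insert x (W - {x})" using x by auto
  have s1: "(\<Sum>i\<in>W-{x}. lam i) = (\<Sum>i\<in>W-{x}. mu i)" unfolding lam_def by (intro sum.cong) auto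
  have s2: "(\<Sum>i\<in>W-{x}. lam i *\<^sub>R P i) = (\<Sum>i\<in>W-{x}. mu i *\<^sub>R P i)" unfolding lam_def by (intro sum.cong) auto
  have "(\<Sum>i\<in>W. lam i) = lam x + (\<Sum>i\<in>W-{x}. lam i)" using fin x by (rule sum.remove)
  hence S0: "(\<Sum>i\<in>W. lam i) = 0" using s1 by (simp add: lam_def)
  have "(\<Sum>i\<in>W. lam i *\<^sub>R P i) = lam x *\<^sub>R P x + (\<Sum>i\<in>W-{x}. lam i *\<^sub>R P i)" using fin x by (rule sum.remove)
  also have "\<dots> = (\<Sum>u\<in>W-{x}. mu u *\<^sub>R (P u - P x))"
    using s2 by (simp add: lam_def scaleR_diff_right sum_subtractf scaleR_sum_left)
  finally have V0: "(\<Sum>i\<in>W. lam i *\<^sub>R P i) = 0" using eq by simp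
  have "\<forall>i\<in>W. lam i = 0" by (rule aff_indep[OF fin c2 tp dot S0 V0]) auto
  thus ?thesis unfolding lam_def by (metis DiffE insertI1)
qed



lemma stacked_inv:
  assumes "stacked_polytope d V E F"
  shows "finite V \<and> E \<subseteq> {{i, j} | i j. i \<in> V \<and> j \<in> V \<and> i \<noteq> j} \<and>
    (\<forall>f\<in>F. f \<subseteq> V \<and> finite f \<and> card f = d + 1 \<and> (\<forall>a\<in>f. \<forall>b\<in>f. a \<noteq> b \<longrightarrow> {a, b} \<in> E))"
  using assms
proof (induction rule: stacked_polytope.induct)
  case (simplex S)
  let ?E = "{{a, b} | a b. a \<in> S \<and> b \<in> S \<and> a \<noteq> b}"
  have "g \<subseteq> S \<and> finite g \<and> card g = d + 1 \<and> (\<forall>a\<in>g. \<forall>b\<in>g. a \<noteq> b \<longrightarrow> {a, b} \<in> ?E)"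
    if g: "g \<in> {S - {a} | a. a \<in> S}" for g
  proof -
    obtain a where a: "a \<in> S" "g = S - {a}" using g by blast
    have C1: "card g = d + 1" using simplex a by (simp add: card_Diff_singleton)
    have C2: "g \<subseteq> S" "finite g" using a simplex by auto
    have C3: "\<forall>x\<in>g. \<forall>y\<in>g. x \<noteq> y \<longrightarrow> {x, y} \<in> ?E"
    proof (intro ballI impI)
      fix x y assume "x \<in> g" "y \<in> g" "x \<noteq> y"
      then have "x \<in> S \<and> y \<in> S \<and> x \<noteq> y" using a by simp
      then show "{x, y} \<in> ?E" by blast
    qed
    show ?thesis by (rule conjI[OF C2(1) conjI[OF C2(2) conjI[OF C1 C3]]])
  qed
  then show ?case
  proof (intro conjI)
    show "finite S" using simplex by simp
  qed (rule subset_refl, rule ballI, assumption)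
next
  case (stack V E F f v)
  note I = stack.IH
  have fin: "finite V" using I by (rule conjunct1)
  have Esub: "E \<subseteq> {{i, j} | i j. i \<in> V \<and> j \<in> V \<and> i \<noteq> j}" using I by (rule conjunct2[THEN conjunct1])
  have FF: "\<forall>f\<in>F. f \<subseteq> V \<and> finite f \<and> card f = d + 1 \<and> (\<forall>a\<in>f. \<forall>b\<in>f. a \<noteq> b \<longrightarrow> {a, b} \<in> E)"
    using I by (rule conjunct2[THEN conjunct2])
  have C: "f \<subseteq> V \<and> finite f \<and> card f = d + 1 \<and> (\<forall>a\<in>f. \<forall>b\<in>f. a \<noteq> b \<longrightarrow> {a, b} \<in> E)"
    using FF stack.hyps(2) by (rule bspec)
  have fV: "f \<subseteq> V" and ff: "finite f" and cf: "card f = d + 1"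
    and cl: "\<forall>a\<in>f. \<forall>b\<in>f. a \<noteq> b \<longrightarrow> {a, b} \<in> E" using C by simp_all
  have vf: "v \<notin> f" using fV stack.hyps(3) by auto
  have c1: "finite (insert v V)" using fin by simp
  have c2: "E \<union> {{v, u} | u. u \<in> f} \<subseteq> {{i, j} | i j. i \<in> insert v V \<and> j \<in> insert v V \<and> i \<noteq> j}"
  proof
    fix e assume "e \<in> E \<union> {{v, u} | u. u \<in> f}"
    then show "e \<in> {{i, j} | i j. i \<in> insert v V \<and> j \<in> insert v V \<and> i \<noteq> j}"
    proof
      assume "e \<in> E"
      then obtain i j where "e = {i, j}" "i \<in> V" "j \<in> V" "i \<noteq> j" using Esub by blast
      then show ?thesis by blast
    next
      assume "e \<in> {{v, u} | u. u \<in> f}"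
      then obtain u where u: "e = {v, u}" "u \<in> f" by blast
      then have "u \<in> V" "v \<noteq> u" using fV vf by auto
      then show ?thesis using u by blast
    qed
  qed
  have c3: "g \<subseteq> insert v V \<and> finite g \<and> card g = d + 1 \<and>
      (\<forall>a\<in>g. \<forall>b\<in>g. a \<noteq> b \<longrightarrow> {a, b} \<in> E \<union> {{v, u} | u. u \<in> f})"
    if g: "g \<in> (F - {f}) \<union> {insert v (f - {u}) | u. u \<in> f}" for g
  proof (cases "g \<in> F - {f}")
    case True
    then have gF: "g \<in> F" by simp
    from FF gF have "g \<subseteq> V \<and> finite g \<and> card g = d + 1 \<and> (\<forall>a\<in>g. \<forall>b\<in>g. a \<noteq> b \<longrightarrow> {a, b} \<in> E)"
      by (rule bspec)
    then have G: "g \<subseteq> V" "finite g" "card g = d + 1" "\<forall>a\<in>g. \<forall>b\<in>g. a \<noteq> b \<longrightarrow> {a, b} \<in> E"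
      by simp_all
    have G2: "g \<subseteq> insert v V" using G(1) by auto
    have G4: "\<forall>a\<in>g. \<forall>b\<in>g. a \<noteq> b \<longrightarrow> {a, b} \<in> E \<union> {{v, u} | u. u \<in> f}"
      using G(4) by (intro ballI impI UnI1) simp
    show ?thesis by (rule conjI[OF G2 conjI[OF G(2) conjI[OF G(3) G4]]])
  next
    case False
    then obtain u where u: "u \<in> f" and gu: "g = insert v (f - {u})" using g by blast
    have D1: "card g = d + 1" using gu ff vf u cf by (simp add: card_Diff_singleton)
    have D3: "\<forall>a\<in>g. \<forall>b\<in>g. a \<noteq> b \<longrightarrow> {a, b} \<in> E \<union> {{v, u} | u. u \<in> f}"
    proof (intro ballI impI)
      fix a b assume ab: "a \<in> g" "b \<in> g" "a \<noteq> b"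
      show "{a, b} \<in> E \<union> {{v, u} | u. u \<in> f}"
      proof (cases "a = v")
        case True
        then have bf: "b \<in> f" using ab gu by auto
        show ?thesis unfolding True by (intro UnI2 CollectI exI[of _ b] conjI refl bf)
      next
        case av: False
        show ?thesis
        proof (cases "b = v")
          case True
          then have "a \<in> f" using ab gu by auto
          then have af: "a \<in> f" .
          have "{a, b} = {v, a}" using True by (simp add: insert_commute)
          then show ?thesis by (simp only:) (intro UnI2 CollectI exI[of _ a] conjI refl af)
        next
          case False
          then have "a \<in> f" "b \<in> f" using ab av gu by auto
          then show ?thesis using cl ab(3) by (intro UnI1) simp
        qed
      qed
    qed
    have D2: "g \<subseteq> insert v V" "finite g" using gu fV ff by auto
    show ?thesis by (rule conjI[OF D2(1) conjI[OF D2(2) conjI[OF D1 D3]]])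
  qed
  show ?case
  proof (intro conjI)
    show "finite (insert v V)" by (rule c1)
    show "E \<union> {{v, u} | u. u \<in> f} \<subseteq> {{i, j} | i j. i \<in> insert v V \<and> j \<in> insert v V \<and> i \<noteq> j}" by (rule c2)
  qed (rule ballI, rule c3, assumption)
qed



lemma stacked_stress_free:
  fixes P :: "'v \<Rightarrow> real^'n"
  assumes "stacked_polytope d V E F" "d \<ge> 2"
    "\<forall>i\<in>V. t i > 0"
    "\<forall>i\<in>V. \<forall>j\<in>V. (i = j \<or> {i, j} \<in> E) \<longrightarrow> P i \<bullet> P j = 1 - t i * t j + (if i = j then 2 * (t j)^2 else 0)"
  shows "stress_free V E P"
  using assms
proof (induction rule: stacked_polytope.induct)
  case (simplex S)
  let ?E = "{{a, b} | a b. a \<in> S \<and> b \<in> S \<and> a \<noteq> b}"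
  show ?case unfolding stress_free_def
  proof (intro allI impI ballI)
    fix T :: "'v set \<Rightarrow> real" and e
    assume eq: "\<forall>i\<in>S. (\<Sum>j\<in>{j\<in>S. {i, j} \<in> ?E}. T {i, j} *\<^sub>R (P j - P i)) = 0"
    assume "e \<in> ?E"
    then obtain a b where ab: "a \<in> S" "b \<in> S" "a \<noteq> b" "e = {a, b}" by blast
    have N: "{j\<in>S. {a, j} \<in> ?E} = S - {a}"
      using ab(1) by (auto simp: doubleton_eq_iff)
    have c2: "card S \<noteq> 2" using simplex by simp
    have "(\<Sum>j\<in>{j\<in>S. {a, j} \<in> ?E}. T {a, j} *\<^sub>R (P j - P a)) = 0"
      using eq ab(1) by (rule bspec)
    hence eqa: "(\<Sum>j\<in>S-{a}. T {a, j} *\<^sub>R (P j - P a)) = 0"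
      unfolding N .
    have "\<forall>u\<in>S-{a}. T {a, u} = 0"
    proof (rule star_indep[where P = P and t = t, OF _ c2 ab(1) _ _ eqa])
      show "finite S" using simplex by simp
      show "\<And>i. i \<in> S \<Longrightarrow> 0 < t i" using simplex.prems by blast
      fix i j assume ij: "i \<in> S" "j \<in> S"
      have "i = j \<or> {i, j} \<in> ?E" using ij by blast
      then show "P i \<bullet> P j = 1 - t i * t j + (if i = j then 2 * (t j)^2 else 0)"
        using simplex.prems(3) ij by blast
    qed
    then show "T e = 0" using ab by auto
  qed
next
  case (stack V E F f v)
  let ?V = "insert v V" and ?E = "E \<union> {{v, u} | u. u \<in> f}"
  have inv: "finite V" "E \<subseteq> {{i, j} | i j. i \<in> V \<and> j \<in> V \<and> i \<noteq> j}"
    "f \<subseteq> V" "finite f" "card f = d + 1" "\<forall>a\<in>f. \<forall>b\<in>f. a \<noteq> b \<longrightarrow> {a, b} \<in> E"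
  proof -
    note I = stacked_inv[OF stack.hyps(1)]
    have A: "finite V" using I by (rule conjunct1)
    have B: "E \<subseteq> {{i, j} | i j. i \<in> V \<and> j \<in> V \<and> i \<noteq> j}" using I by (rule conjunct2[THEN conjunct1])
    have "\<forall>f\<in>F. f \<subseteq> V \<and> finite f \<and> card f = d + 1 \<and> (\<forall>a\<in>f. \<forall>b\<in>f. a \<noteq> b \<longrightarrow> {a, b} \<in> E)"
      using I by (rule conjunct2[THEN conjunct2])
    hence C: "f \<subseteq> V \<and> finite f \<and> card f = d + 1 \<and> (\<forall>a\<in>f. \<forall>b\<in>f. a \<noteq> b \<longrightarrow> {a, b} \<in> E)"
      using stack.hyps(2) by (rule bspec)
    show "finite V" "E \<subseteq> {{i, j} | i j. i \<in> V \<and> j \<in> V \<and> i \<noteq> j}"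
    "f \<subseteq> V" "finite f" "card f = d + 1" "\<forall>a\<in>f. \<forall>b\<in>f. a \<noteq> b \<longrightarrow> {a, b} \<in> E"
      using A B C by simp_all
  qed
  have vV: "v \<notin> V" using stack by simp
  have vf: "v \<notin> f" using inv vV by auto
  have vE: "{v, x} \<notin> E" for x
  proof
    assume "{v, x} \<in> E"
    then obtain i j where ij: "{v, x} = {i, j}" "i \<in> V" "j \<in> V" using inv(2) by blast
    have "v \<in> {i, j}" using ij(1) by (metis insertI1)
    then show False using ij vV by auto
  qed
  have p2: "\<forall>i\<in>V. 0 < t i" using stack.prems(2) by blast
  have p3: "\<forall>i\<in>V. \<forall>j\<in>V. (i = j \<or> {i, j} \<in> E) \<longrightarrow> P i \<bullet> P j = 1 - t i * t j + (if i = j then 2 * (t j)^2 else 0)"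
  proof (intro ballI impI)
    fix i j assume i: "i \<in> V" and j: "j \<in> V" and h: "i = j \<or> {i, j} \<in> E"
    have h': "i = j \<or> {i, j} \<in> ?E" using h by blast
    show "P i \<bullet> P j = 1 - t i * t j + (if i = j then 2 * (t j)^2 else 0)"
      by (rule mp[OF bspec[OF bspec[OF stack.prems(3) insertI2[OF i]] insertI2[OF j]] h'])
  qed
  have IH: "stress_free V E P" by (rule stack.IH[OF stack.prems(1) p2 p3])
  show ?case unfolding stress_free_def
  proof (intro allI impI)
    fix T :: "'v set \<Rightarrow> real"
    assume eq: "\<forall>i\<in>?V. (\<Sum>j\<in>{j\<in>?V. {i, j} \<in> ?E}. T {i, j} *\<^sub>R (P j - P i)) = 0"
    have Nv: "{j\<in>?V. {v, j} \<in> ?E} = f"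
    proof
      show "f \<subseteq> {j\<in>?V. {v, j} \<in> ?E}" using inv(3) by auto
      show "{j\<in>?V. {v, j} \<in> ?E} \<subseteq> f"
      proof
        fix j assume "j \<in> {j\<in>?V. {v, j} \<in> ?E}"
        then obtain u where "u \<in> f" "{v, j} = {v, u}" using vE by auto
        then show "j \<in> f" using vf by (auto simp: doubleton_eq_iff)
      qed
    qed
    have "(\<Sum>j\<in>{j\<in>?V. {v, j} \<in> ?E}. T {v, j} *\<^sub>R (P j - P v)) = 0"
      using bspec[OF eq insertI1] .
    moreover have fv: "insert v f - {v} = f" using vf by simp
    ultimately have eqv: "(\<Sum>u\<in>insert v f - {v}. T {v, u} *\<^sub>R (P u - P v)) = 0"
      unfolding Nv by (simp only:)
    have cW: "card (insert v f) = d + 2" using card_insert_disjoint[OF inv(4) vf] inv(5) by simp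
    have W: "finite (insert v f)" "card (insert v f) \<noteq> 2" "v \<in> insert v f"
      using inv(4) cW stack.prems(1) by simp_all
    have Wsub: "insert v f \<subseteq> ?V" using inv by auto
    have Tv: "\<forall>u\<in>insert v f - {v}. T {v, u} = 0"
    proof (rule star_indep[where P = P and t = t, OF W _ _ eqv])
      show "\<And>i. i \<in> insert v f \<Longrightarrow> 0 < t i" using Wsub stack.prems by blast
      fix i j assume ij: "i \<in> insert v f" "j \<in> insert v f"
      have h: "i = j \<or> {i, j} \<in> ?E" using ij inv(6) by (auto simp: insert_commute)
      have iV: "i \<in> ?V" and jV: "j \<in> ?V" using ij Wsub by auto
      show "P i \<bullet> P j = 1 - t i * t j + (if i = j then 2 * (t j)^2 else 0)"
        by (rule mp[OF bspec[OF bspec[OF stack.prems(3) iV] jV] h])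
    qed
    hence Tf: "\<And>u. u \<in> f \<Longrightarrow> T {v, u} = 0" using vf by auto
    have eqV: "\<forall>i\<in>V. (\<Sum>j\<in>{j\<in>V. {i, j} \<in> E}. T {i, j} *\<^sub>R (P j - P i)) = 0"
    proof
      fix i assume i: "i \<in> V"
      have "(\<Sum>j\<in>{j\<in>?V. {i, j} \<in> ?E}. T {i, j} *\<^sub>R (P j - P i)) =
            (\<Sum>j\<in>{j\<in>V. {i, j} \<in> E}. T {i, j} *\<^sub>R (P j - P i))"
      proof (rule sum.mono_neutral_right)
        show "finite {j\<in>?V. {i, j} \<in> ?E}" using inv(1) by simp
        show "{j\<in>V. {i, j} \<in> E} \<subseteq> {j\<in>?V. {i, j} \<in> ?E}" by auto
        show "\<forall>j\<in>{j\<in>?V. {i, j} \<in> ?E} - {j\<in>V. {i, j} \<in> E}. T {i, j} *\<^sub>R (P j - P i) = 0"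
        proof
          fix j assume j: "j \<in> {j\<in>?V. {i, j} \<in> ?E} - {j\<in>V. {i, j} \<in> E}"
          have j': "j \<in> ?V \<and> {i, j} \<in> ?E \<and> \<not> (j \<in> V \<and> {i, j} \<in> E)"
            using j by (simp only: Diff_iff mem_Collect_eq simp_thms)
          have jV: "j \<in> ?V" using j' by (elim conjE)
          have jE: "{i, j} \<in> ?E" using j' by (elim conjE)
          have nj: "\<not> (j \<in> V \<and> {i, j} \<in> E)" using j' by (elim conjE)
          have "{i, j} \<notin> E"
          proof (cases "j \<in> V")
            case True then show ?thesis using nj by blast
          next
            case False
            hence "j = v" using jV by blast
            hence "{i, j} = {v, i}" by (simp add: insert_commute)
            then show ?thesis using vE[of i] by simp
          qed
          then obtain u where u: "u \<in> f" "{i, j} = {v, u}" using jE by blast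
          have "i \<noteq> v" using i vV by auto
          hence "i = u" "j = v" using u by (auto simp: doubleton_eq_iff)
          then show "T {i, j} *\<^sub>R (P j - P i) = 0" using Tf u by (simp add: insert_commute)
        qed
      qed
      moreover have "(\<Sum>j\<in>{j\<in>?V. {i, j} \<in> ?E}. T {i, j} *\<^sub>R (P j - P i)) = 0"
        using bspec[OF eq insertI2[OF i]] .
      ultimately show "(\<Sum>j\<in>{j\<in>V. {i, j} \<in> E}. T {i, j} *\<^sub>R (P j - P i)) = 0" by simp
    qed
    have "\<forall>e\<in>E. T e = 0" by (rule mp[OF spec[OF IH[unfolded stress_free_def]] eqV])
    then show "\<forall>e\<in>?E. T e = 0" using Tf by auto
  qed
qed



lemma polar_dot:
  fixes c1 c2 :: "real^'n"
  assumes "c1 \<bullet> c2 = cos (a + b)" "cos a \<noteq> 0" "cos b \<noteq> 0"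
  shows "polar_vertex c1 a \<bullet> polar_vertex c2 b = 1 - tan a * tan b"
  using assms by (simp add: polar_vertex_def cos_add tan_def field_simps)

lemma polar_self:
  fixes c1 :: "real^'n"
  assumes "norm c1 = 1" "cos a \<noteq> 0"
  shows "polar_vertex c1 a \<bullet> polar_vertex c1 a = 1 + (tan a)^2"
proof -
  have "c1 \<bullet> c1 = 1" using assms by (simp add: dot_square_norm)
  thus ?thesis using assms sin_cos_squared_add[of a]
    by (simp add: polar_vertex_def tan_def field_simps power2_eq_square)
qed

theorem theorem5p5:
  fixes V :: "'v set" and E :: "'v set set"
    and c :: "'v \<Rightarrow> real^'n" and th :: "'v \<Rightarrow> real" and d :: nat
  assumes "d \<ge> 2"
    and "CARD('n) = d + 1"
    and "stacked_polytope_graph d V E"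
    and "cap_packing V c th"
    and "tangency_graph_is V c th E"
  shows "stress_free V E (\<lambda>i. polar_vertex (c i) (th i))"
proof -
  obtain F where F: "stacked_polytope d V E F" using assms(3) stacked_polytope_graph_def by blast
  have pk: "\<And>i. i \<in> V \<Longrightarrow> norm (c i) = 1 \<and> 0 < th i \<and> th i < pi / 2"
    and disj: "\<And>i j. i \<in> V \<Longrightarrow> j \<in> V \<Longrightarrow> i \<noteq> j \<Longrightarrow> cap_interior (c i) (th i) \<inter> cap_interior (c j) (th j) = {}"
    using assms(4) unfolding cap_packing_def by blast+
  have tg: "\<And>i j. i \<in> V \<Longrightarrow> j \<in> V \<Longrightarrow> i \<noteq> j \<Longrightarrow> {i, j} \<in> E \<Longrightarrow> caps_tangent (c i) (th i) (c j) (th j)"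
    using assms(5) unfolding tangency_graph_is_def by blast
  have cpos: "cos (th i) > 0" if "i \<in> V" for i using pk[OF that] by (intro cos_gt_zero_pi) auto
  show ?thesis
  proof (rule stacked_stress_free[OF F assms(1), where t = "\<lambda>i. tan (th i)"])
    show "\<forall>i\<in>V. 0 < tan (th i)" using pk tan_gt_zero by auto
    show "\<forall>i\<in>V. \<forall>j\<in>V. i = j \<or> {i, j} \<in> E \<longrightarrow>
       polar_vertex (c i) (th i) \<bullet> polar_vertex (c j) (th j) =
       1 - tan (th i) * tan (th j) + (if i = j then 2 * (tan (th j))\<^sup>2 else 0)"
    proof (intro ballI impI)
      fix i j assume i: "i \<in> V" and j: "j \<in> V" and h: "i = j \<or> {i, j} \<in> E"
      show "polar_vertex (c i) (th i) \<bullet> polar_vertex (c j) (th j) =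
       1 - tan (th i) * tan (th j) + (if i = j then 2 * (tan (th j))\<^sup>2 else 0)"
      proof (cases "i = j")
        case True
        then show ?thesis using polar_self[of "c j" "th j"] pk[OF j] cpos[OF j]
          by (simp add: power2_eq_square)
      next
        case False
        with h have e: "{i, j} \<in> E" by simp
        obtain x where x: "x \<in> cap (c i) (th i) \<inter> cap (c j) (th j)"
          using tg[OF i j False e] unfolding caps_tangent_def by blast
        have ge: "c i \<bullet> c j \<ge> cos (th i + th j)"
          apply (rule cap_dot_ge[where x = x])
          using x pk[OF i] pk[OF j] by (auto simp: cap_def unit_sphere_def inner_commute)
        have le: "c i \<bullet> c j \<le> cos (th i + th j)"
        proof (rule cap_dot_le)
          fix y :: "real^'n" assume "norm y = 1" "y \<bullet> c i > cos (th i)" "y \<bullet> c j > cos (th j)"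
          hence "y \<in> cap_interior (c i) (th i) \<inter> cap_interior (c j) (th j)"
            by (simp add: cap_interior_def unit_sphere_def)
          then show False using disj[OF i j False] by blast
        qed (use pk[OF i] pk[OF j] in auto)
        have "c i \<bullet> c j = cos (th i + th j)" using ge le by simp
        then show ?thesis using polar_dot[of "c i" "c j" "th i" "th j"] cpos[OF i] cpos[OF j] False
          by simp
      qed
    qed
  qed
qed

end
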